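(* Let $P$ be a probability distribution of a random variable $\xi$, $\mathcal X\subseteq\mathbb R^d$, $\lambda>0$. Assume: (i) for every $\xi$, $x\mapsto \ell(x;\xi)$ is $G$-Lipschitz continuous and $L$-smooth on $\mathcal X$; (ii) $\psi:\mathbb R\to[0,+\infty]$ is convex, $\psi(1)=0$, $\psi(t)=+\infty$ for $t<0$, and $\psi^*(t)=\sup_s(st-\psi(s))$ is $M$-smooth; (iii) for all $x\in\mathcal X$, $\mathbb E_{\xi\sim P}(\ell(x;\xi)-\ell(x))^2\le\sigma^2$ where $\ell(x)=\mathbb E_{\xi\sim P}\ell(x;\xi)$. Define the stochastic objective $\widehat{\mathcal L}(x,\eta,\xi)=\lambda\psi^*\big(\frac{\ell(x;\xi)-G\eta}{\lambda}\big)+G\eta$ and $\widehat{\mathcal L}(x,\eta)=\mathbb E_{\xi\sim P}\widehat{\mathcal L}(x,\eta,\xi)$, with gradients taken in $(x,\eta)$. Then for all $(x,\eta)$, $$\mathbb E_\xi\|\nabla\widehat{\mathcal L}(x,\eta,\xi)-\nabla\widehat{\mathcal L}(x,\eta)\|^2\le 11G^2M^2\lambda^{-2}\sigma^2+8\big(G^2+\|\nabla\widehat{\mathcal L}(x,\eta)\|^2\big).$$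
   Context: Norms are Euclidean norms on $\mathbb R^{d+1}$. *)

theory Defs
  imports "HOL-Analysis.Analysis" "HOL-Probability.Probability"
begin

definition grad :: "('a::real_inner \<Rightarrow> real) \<Rightarrow> 'a \<Rightarrow> 'a" where
  "grad f z = (SOME D. GDERIV f z :> D)"

definition fconj :: "(real \<Rightarrow> ereal) \<Rightarrow> real \<Rightarrow> ereal" where
  "fconj \<psi> t = (SUP s. ereal (s * t) - \<psi> s)"

definition ereal_convex :: "(real \<Rightarrow> ereal) \<Rightarrow> bool" where
  "ereal_convex \<psi> \<longleftrightarrow> (\<forall>x y t. 0 \<le> t \<and> t \<le> 1 \<longrightarrow>
      \<psi> ((1 - t) * x + t * y) \<le> ereal (1 - t) * \<psi> x + ereal t * \<psi> y)"

definition lipschitz_on_set :: "real \<Rightarrow> 'a::real_normed_vector set \<Rightarrow> ('a \<Rightarrow> 'b::real_normed_vector) \<Rightarrow> bool" where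
  "lipschitz_on_set G X f \<longleftrightarrow> (\<forall>x\<in>X. \<forall>y\<in>X. norm (f x - f y) \<le> G * norm (x - y))"

definition smooth_on_set :: "real \<Rightarrow> 'a::real_inner set \<Rightarrow> ('a \<Rightarrow> real) \<Rightarrow> bool" where
  "smooth_on_set L X f \<longleftrightarrow> (\<forall>x\<in>X. f differentiable (at x)) \<and>
      (\<forall>x\<in>X. \<forall>y\<in>X. norm (grad f x - grad f y) \<le> L * norm (x - y))"

definition Lhat :: "(real \<Rightarrow> ereal) \<Rightarrow> real \<Rightarrow> real \<Rightarrow> ('a \<Rightarrow> 'b \<Rightarrow> real) \<Rightarrow> 'a \<times> real \<Rightarrow> 'b \<Rightarrow> real" where
  "Lhat \<psi> lam G ell z \<xi> =
     lam * real_of_ereal (fconj \<psi> ((ell (fst z) \<xi> - G * snd z) / lam)) + G * snd z"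

end

theory Submission
  imports Defs
begin


lemma gderiv_exists:
  fixes f :: "'a::euclidean_space \<Rightarrow> real"
  assumes "f differentiable (at z)"
  shows "GDERIV f z :> grad f z"
proof -
  from assms obtain F where F: "(f has_derivative F) (at z)" unfolding differentiable_def by blast
  then have lin: "linear F" using has_derivative_linear by blast
  define D where "D = (\<Sum>b\<in>Basis. F b *\<^sub>R b)"
  have "F h = inner h D" for h
  proof -
    have "F h = F (\<Sum>b\<in>Basis. inner h b *\<^sub>R b)" by (simp add: euclidean_representation)
    also have "\<dots> = (\<Sum>b\<in>Basis. inner h b * F b)" using lin by (simp add: linear_sum linear_scale)
    also have "\<dots> = inner h D" unfolding D_def by (simp add: inner_sum_right mult.commute)
    finally show ?thesis .
  qed
  then have "F = (\<lambda>h. inner h D)" by auto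
  then have "GDERIV f z :> D" using F by (simp add: gderiv_def)
  then show ?thesis unfolding grad_def by (rule someI)
qed

lemma gderiv_unique:
  fixes f :: "'a::real_inner \<Rightarrow> real"
  assumes "GDERIV f z :> D" "GDERIV f z :> D'"
  shows "D = D'"
proof -
  have "(\<lambda>h. inner h D) = (\<lambda>h. inner h D')"
    using assms unfolding gderiv_def by (rule has_derivative_unique)
  then have "inner (D - D') D = inner (D - D') D'" by metis
  then have "inner (D - D') (D - D') = 0" by (simp add: inner_diff_right)
  then show ?thesis by simp
qed

lemma grad_eq:
  fixes f :: "'a::real_inner \<Rightarrow> real"
  assumes "GDERIV f z :> D" shows "grad f z = D"
proof -
  have "GDERIV f z :> grad f z" unfolding grad_def using assms by (rule someI)
  then show ?thesis using assms gderiv_unique by blast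
qed

lemma dir_deriv_at:
  fixes f :: "'a::real_normed_vector \<Rightarrow> real"
  assumes "(f has_derivative F) (at z)"
  shows "((\<lambda>t. (f (z + t *\<^sub>R h) - f z) / t) \<longlongrightarrow> F h) (at 0)"
proof -
  have lin: "linear F" using assms has_derivative_linear by blast
  have g: "((\<lambda>t::real. z + t *\<^sub>R h) has_derivative (\<lambda>t. t *\<^sub>R h)) (at 0)"
    by (auto intro!: derivative_eq_intros)
  have "((\<lambda>t. f (z + t *\<^sub>R h)) has_derivative (\<lambda>t. F (t *\<^sub>R h))) (at 0)"
    using has_derivative_compose[OF g] assms by simp
  moreover have "(\<lambda>t. F (t *\<^sub>R h)) = (*) (F h)"
    using lin by (auto simp: linear_scale)
  ultimately have "((\<lambda>t. f (z + t *\<^sub>R h)) has_field_derivative F h) (at 0)"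
    by (simp add: has_field_derivative_def)
  then show ?thesis by (simp add: DERIV_def)
qed

lemma dir_deriv_seq:
  fixes f :: "'a::real_normed_vector \<Rightarrow> real"
  assumes "(f has_derivative F) (at z)"
  shows "(\<lambda>n. (f (z + (1 / real (Suc n)) *\<^sub>R h) - f z) / (1 / real (Suc n))) \<longlonglongrightarrow> F h"
proof -
  have l: "(\<lambda>n. 1 / real (Suc n)) \<longlonglongrightarrow> 0" by (rule LIMSEQ_Suc[OF lim_const_over_n]) 
  have "\<forall>X. (\<forall>i. X i \<noteq> 0) \<longrightarrow> X \<longlonglongrightarrow> 0 \<longrightarrow> (\<lambda>x. (f (z + X x *\<^sub>R h) - f z) / X x) \<longlonglongrightarrow> F h"
    using dir_deriv_at[OF assms, of h] unfolding tendsto_at_iff_sequentially by (simp add: o_def)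
  from this[rule_format, of "\<lambda>n. 1 / real (Suc n)"] l show ?thesis by simp
qed

lemma lip_bound:
  fixes f :: "real \<Rightarrow> real"
  assumes d: "\<And>t. f differentiable (at t)"
    and L: "\<And>s t. \<bar>deriv f s - deriv f t\<bar> \<le> M * \<bar>s - t\<bar>"
  shows "\<bar>f b - f a\<bar> \<le> \<bar>b - a\<bar> * (\<bar>deriv f a\<bar> + M * \<bar>b - a\<bar>)"
proof -
  have D: "\<And>t. DERIV f t :> deriv f t" using d DERIV_deriv_iff_real_differentiable by blast
  have key: "\<bar>f q - f p\<bar> \<le> \<bar>q - p\<bar> * (\<bar>deriv f a\<bar> + M * \<bar>b - a\<bar>)"
    if "p < q" "{p..q} = {min a b..max a b}" for p q
  proof -
    obtain c where c: "p < c" "c < q" "f q - f p = (q - p) * deriv f c"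
      using MVT2[OF \<open>p < q\<close>, of f "deriv f"] D by blast
    have "\<bar>c - a\<bar> \<le> \<bar>b - a\<bar>" using that c by (auto simp: min_def max_def split: if_splits)
    have "\<bar>deriv f c\<bar> \<le> \<bar>deriv f a\<bar> + \<bar>deriv f c - deriv f a\<bar>" by linarith
    also have "\<dots> \<le> \<bar>deriv f a\<bar> + M * \<bar>c - a\<bar>" using L[of c a] by linarith
    also have "\<dots> \<le> \<bar>deriv f a\<bar> + M * \<bar>b - a\<bar>"
    proof -
      have "\<bar>deriv f 1 - deriv f 0\<bar> \<le> M" using L[of 1 0] by simp
      then have "M \<ge> 0" by linarith
      then show ?thesis using \<open>\<bar>c - a\<bar> \<le> \<bar>b - a\<bar>\<close>
        by (auto intro: mult_left_mono) 
    qed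
    finally have "\<bar>deriv f c\<bar> \<le> \<bar>deriv f a\<bar> + M * \<bar>b - a\<bar>" .
    then show ?thesis using c(3) \<open>p < q\<close> by (simp add: abs_mult mult_right_mono)
  qed
  show ?thesis
  proof (cases "a < b")
    case True then show ?thesis using key[of a b] by auto
  next
    case False
    show ?thesis
    proof (cases "b < a")
      case True then show ?thesis using key[of b a] by (auto simp: abs_minus_commute)
    next
      case False then show ?thesis using \<open>\<not> a < b\<close> by auto
    qed
  qed
qed



lemma deriv_under_integral:
  fixes F :: "'c::euclidean_space \<Rightarrow> 'b \<Rightarrow> real"
  assumes Phi: "GDERIV (\<lambda>z. \<integral>\<xi>. F z \<xi> \<partial>P) z0 :> w"
    and dF: "\<And>\<xi>. \<xi> \<in> space P \<Longrightarrow> GDERIV (\<lambda>z. F z \<xi>) z0 :> v \<xi>"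
    and meas: "\<And>n. (\<lambda>\<xi>. F (z0 + (1 / real (Suc n)) *\<^sub>R h) \<xi>) \<in> borel_measurable P"
    and int0: "integrable P (F z0)"
    and W: "integrable P W"
    and bnd: "\<And>n \<xi>. \<xi> \<in> space P \<Longrightarrow>
       \<bar>(F (z0 + (1 / real (Suc n)) *\<^sub>R h) \<xi> - F z0 \<xi>) / (1 / real (Suc n))\<bar> \<le> W \<xi>"
  shows "integrable P (\<lambda>\<xi>. inner h (v \<xi>)) \<and> inner h w = (\<integral>\<xi>. inner h (v \<xi>) \<partial>P)"
proof -
  define t where "t n = 1 / real (Suc n)" for n
  define s where "s n \<xi> = (F (z0 + t n *\<^sub>R h) \<xi> - F z0 \<xi>) / t n" for n \<xi>
  have tpos: "t n > 0" for n by (simp add: t_def)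
  have m0: "F z0 \<in> borel_measurable P" using int0 by (rule borel_measurable_integrable)
  have sm: "s n \<in> borel_measurable P" for n
    unfolding s_def using meas[of n] m0 unfolding t_def by measurable
  have lim: "(\<lambda>n. s n \<xi>) \<longlonglongrightarrow> inner h (v \<xi>)" if "\<xi> \<in> space P" for \<xi>
    using dir_deriv_seq[of "\<lambda>z. F z \<xi>" "\<lambda>h. inner h (v \<xi>)" z0 h] dF[OF that]
    unfolding s_def t_def gderiv_def by simp
  have vm: "(\<lambda>\<xi>. inner h (v \<xi>)) \<in> borel_measurable P"
    by (rule borel_measurable_LIMSEQ_real[OF lim sm])
  have bd: "AE \<xi> in P. norm (s n \<xi>) \<le> W \<xi>" for n
    by (rule AE_I2) (use bnd in \<open>auto simp: s_def t_def\<close>)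
  have vi: "integrable P (\<lambda>\<xi>. inner h (v \<xi>))"
    by (rule integrable_dominated_convergence[OF vm sm W AE_I2[OF lim] bd])
  have si: "integrable P (s n)" for n
    by (rule integrable_dominated_convergence2[OF vm sm W AE_I2[OF lim] bd])
  have l1: "(\<lambda>n. \<integral>\<xi>. s n \<xi> \<partial>P) \<longlonglongrightarrow> (\<integral>\<xi>. inner h (v \<xi>) \<partial>P)"
    by (rule integral_dominated_convergence[OF vm sm W AE_I2[OF lim] bd])
  have eq: "(\<integral>\<xi>. s n \<xi> \<partial>P) = ((\<integral>\<xi>. F (z0 + t n *\<^sub>R h) \<xi> \<partial>P) - (\<integral>\<xi>. F z0 \<xi> \<partial>P)) / t n" for n
  proof -
    have pt: "F (z0 + t n *\<^sub>R h) \<xi> = F z0 \<xi> + t n * s n \<xi>" for \<xi>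
      using tpos[of n] by (simp add: s_def)
    have "(\<integral>\<xi>. F (z0 + t n *\<^sub>R h) \<xi> \<partial>P) = (\<integral>\<xi>. F z0 \<xi> + t n * s n \<xi> \<partial>P)"
      by (simp add: pt)
    also have "\<dots> = (\<integral>\<xi>. F z0 \<xi> \<partial>P) + t n * (\<integral>\<xi>. s n \<xi> \<partial>P)"
      using int0 si[of n] by simp
    finally show ?thesis using tpos[of n] by simp
  qed
  have l2: "(\<lambda>n. \<integral>\<xi>. s n \<xi> \<partial>P) \<longlonglongrightarrow> inner h w"
    using dir_deriv_seq[of "\<lambda>z. \<integral>\<xi>. F z \<xi> \<partial>P" "\<lambda>h. inner h w" z0 h] Phi
    unfolding eq t_def gderiv_def by simp
  show ?thesis using vi LIMSEQ_unique[OF l2 l1] by simp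
qed



lemma arith_fin:
  fixes b X K Y g q n nw :: real
  shows "b = 2 * X + Y - n \<Longrightarrow> X \<le> K \<Longrightarrow> 0 \<le> K \<Longrightarrow> Y \<le> 2 * g + 2 * q \<Longrightarrow> nw = n + q
    \<Longrightarrow> 0 \<le> n \<Longrightarrow> 0 \<le> g \<Longrightarrow> 0 \<le> q \<Longrightarrow> b \<le> 11 * K + 8 * (g + nw)"
  by (simp add: algebra_simps)

theorem lemma3p3:
  fixes P :: "'b measure"
    and X :: "'a::euclidean_space set"
    and ell :: "'a \<Rightarrow> 'b \<Rightarrow> real"
    and \<psi> :: "real \<Rightarrow> ereal"
    and lam G L M \<sigma> :: real
    and x :: 'a and \<eta> :: real
  assumes P: "prob_space P"
    and X_open: "open X"
    and lam_pos: "lam > 0"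
    and meas: "\<And>x. (\<lambda>\<xi>. ell x \<xi>) \<in> borel_measurable P"
    and lip: "\<And>\<xi>. \<xi> \<in> space P \<Longrightarrow> lipschitz_on_set G X (\<lambda>x. ell x \<xi>)"
    and smooth: "\<And>\<xi>. \<xi> \<in> space P \<Longrightarrow> smooth_on_set L X (\<lambda>x. ell x \<xi>)"
    and psi_nonneg: "\<And>s. \<psi> s \<ge> 0"
    and psi_convex: "ereal_convex \<psi>"
    and psi_one: "\<psi> 1 = 0"
    and psi_neg: "\<And>t. t < 0 \<Longrightarrow> \<psi> t = \<infinity>"
    and conj_smooth: "\<exists>f. (\<forall>t. fconj \<psi> t = ereal (f t)) \<and> (\<forall>t. f differentiable (at t))
                        \<and> (\<forall>s t. \<bar>deriv f s - deriv f t\<bar> \<le> M * \<bar>s - t\<bar>)"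
    and ell_int: "\<And>x. x \<in> X \<Longrightarrow> integrable P (\<lambda>\<xi>. ell x \<xi>)"
    and var_int: "\<And>x. x \<in> X \<Longrightarrow>
                    integrable P (\<lambda>\<xi>. (ell x \<xi> - (\<integral>\<zeta>. ell x \<zeta> \<partial>P))\<^sup>2)"
    and var_bound: "\<And>x. x \<in> X \<Longrightarrow>
                    (\<integral>\<xi>. (ell x \<xi> - (\<integral>\<zeta>. ell x \<zeta> \<partial>P))\<^sup>2 \<partial>P) \<le> \<sigma>\<^sup>2"
    and x_in: "x \<in> X"
    and Lbar_diff: "(\<lambda>z. \<integral>\<xi>. Lhat \<psi> lam G ell z \<xi> \<partial>P) differentiable (at (x, \<eta>))"
  shows "(\<integral>\<^sup>+\<xi>. ennreal ((norm (grad (\<lambda>z. Lhat \<psi> lam G ell z \<xi>) (x, \<eta>)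
                 - grad (\<lambda>z. \<integral>\<zeta>. Lhat \<psi> lam G ell z \<zeta> \<partial>P) (x, \<eta>)))\<^sup>2) \<partial>P)
         \<le> ennreal (11 * G\<^sup>2 * M\<^sup>2 * \<sigma>\<^sup>2 / lam\<^sup>2
              + 8 * (G\<^sup>2 + (norm (grad (\<lambda>z. \<integral>\<zeta>. Lhat \<psi> lam G ell z \<zeta> \<partial>P) (x, \<eta>)))\<^sup>2))"
proof -
  interpret prob_space P by (rule P)
  obtain f where fc: "\<And>t. fconj \<psi> t = ereal (f t)" and fd: "\<And>t. f differentiable (at t)"
     and fL: "\<And>s t. \<bar>deriv f s - deriv f t\<bar> \<le> M * \<bar>s - t\<bar>" using conj_smooth by blast
  define f' where "f' = deriv f"
  have M0: "M \<ge> 0"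
  proof -
    have "\<bar>deriv f 1 - deriv f 0\<bar> \<le> M" using fL[of 1 0] by simp
    then show ?thesis by linarith
  qed
  have fD: "\<And>t. DERIV f t :> f' t" using fd DERIV_deriv_iff_real_differentiable f'_def by blast
  have fcont: "continuous_on UNIV f"
    using fD by (meson DERIV_isCont continuous_at_imp_continuous_on)
  have f'cont: "continuous_on UNIV f'"
  proof -
    have "M-lipschitz_on UNIV f'" unfolding lipschitz_on_def dist_real_def f'_def using M0 fL by auto
    then show ?thesis by (rule lipschitz_on_continuous_on)
  qed
  have Lh: "\<And>z \<xi>. Lhat \<psi> lam G ell z \<xi> = lam * f ((ell (fst z) \<xi> - G * snd z) / lam) + G * snd z"
    by (simp add: Lhat_def fc)
  have Lm: "(\<lambda>\<xi>. Lhat \<psi> lam G ell z \<xi>) \<in> borel_measurable P" for z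
  proof -
    have "(\<lambda>\<xi>. (ell (fst z) \<xi> - G * snd z) / lam) \<in> borel_measurable P" using meas[of "fst z"] by measurable
    from borel_measurable_continuous_on[OF fcont this] show ?thesis unfolding Lh by measurable
  qed
  define w where "w = grad (\<lambda>z. \<integral>\<zeta>. Lhat \<psi> lam G ell z \<zeta> \<partial>P) (x, \<eta>)"
  have Phi: "GDERIV (\<lambda>z. \<integral>\<zeta>. Lhat \<psi> lam G ell z \<zeta> \<partial>P) (x, \<eta>) :> w"
    unfolding w_def using Lbar_diff by (rule gderiv_exists)
  define m where "m = (\<integral>\<xi>. ell x \<xi> \<partial>P)"
  define u where "u \<xi> = (ell x \<xi> - G * \<eta>) / lam" for \<xi>
  define ub where "ub = (m - G * \<eta>) / lam"
  define a where "a \<xi> = f' (u \<xi>)" for \<xi>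
  define g where "g \<xi> = grad (\<lambda>y. ell y \<xi>) x" for \<xi>
  define v where "v \<xi> = (a \<xi> *\<^sub>R g \<xi>, G * (1 - a \<xi>))" for \<xi>
  obtain r where r: "r > 0" "ball x r \<subseteq> X" using X_open x_in open_contains_ball by blast
  have gD: "GDERIV (\<lambda>y. ell y \<xi>) x :> g \<xi>" if "\<xi> \<in> space P" for \<xi>
    using smooth[OF that] x_in unfolding smooth_on_set_def g_def by (auto intro: gderiv_exists)
  have vD: "GDERIV (\<lambda>z. Lhat \<psi> lam G ell z \<xi>) (x, \<eta>) :> v \<xi>" if "\<xi> \<in> space P" for \<xi>
  proof -
    have e1: "((\<lambda>z. ell (fst z) \<xi>) has_derivative (\<lambda>h. inner (fst h) (g \<xi>))) (at (x, \<eta>))"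
      by (rule has_derivative_compose[OF has_derivative_fst[OF has_derivative_ident]])
        (use gD[OF that] in \<open>simp add: gderiv_def\<close>)
    have e2: "((\<lambda>z. (ell (fst z) \<xi> - G * snd z) / lam) has_derivative
        (\<lambda>h. (inner (fst h) (g \<xi>) - G * snd h) / lam)) (at (x, \<eta>))"
      using lam_pos by (auto intro!: derivative_eq_intros e1)
    have e3: "(f has_derivative (\<lambda>t. f' (u \<xi>) * t)) (at ((\<lambda>z. (ell (fst z) \<xi> - G * snd z) / lam) (x, \<eta>)))"
      using fD[of "u \<xi>"] unfolding has_field_derivative_def u_def by simp
    have e4: "((\<lambda>z. Lhat \<psi> lam G ell z \<xi>) has_derivative
        (\<lambda>h. lam * (f' (u \<xi>) * ((inner (fst h) (g \<xi>) - G * snd h) / lam)) + G * snd h)) (at (x, \<eta>))"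
      unfolding Lh
      by (auto intro!: derivative_eq_intros has_derivative_compose[OF e2 e3])
    have "(\<lambda>h. lam * (f' (u \<xi>) * ((inner (fst h) (g \<xi>) - G * snd h) / lam)) + G * snd h)
        = (\<lambda>h. inner h (v \<xi>))"
      using lam_pos by (auto simp: v_def a_def inner_prod_def field_simps)
    then show ?thesis using e4 unfolding gderiv_def by simp
  qed
  have gb: "(norm (g \<xi>))\<^sup>2 \<le> G\<^sup>2" if \<xi>: "\<xi> \<in> space P" for \<xi>
  proof -
    have lim: "((\<lambda>t. (ell (x + t *\<^sub>R g \<xi>) \<xi> - ell x \<xi>) / t) \<longlongrightarrow> inner (g \<xi>) (g \<xi>)) (at 0)"
      using dir_deriv_at[of "\<lambda>y. ell y \<xi>"] gD[OF \<xi>] unfolding gderiv_def by blast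
    have ev: "eventually (\<lambda>t. \<bar>(ell (x + t *\<^sub>R g \<xi>) \<xi> - ell x \<xi>) / t\<bar> \<le> \<bar>G\<bar> * norm (g \<xi>)) (at (0::real))"
      unfolding eventually_at
    proof (intro exI[of _ "r / (norm (g \<xi>) + 1)"] conjI ballI impI)
      show "0 < r / (norm (g \<xi>) + 1)" using r(1) by (intro divide_pos_pos) (auto intro: add_nonneg_pos)
      fix t :: real assume t: "t \<noteq> 0 \<and> dist t 0 < r / (norm (g \<xi>) + 1)"
      have "\<bar>t\<bar> * norm (g \<xi>) \<le> \<bar>t\<bar> * (norm (g \<xi>) + 1)" by (simp add: mult_left_mono)
      also have "\<dots> < r"
      proof -
        have p: "norm (g \<xi>) + 1 > 0" by (auto intro: add_nonneg_pos)
        have "\<bar>t\<bar> < r / (norm (g \<xi>) + 1)" using t by (simp add: dist_real_def)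
        then show ?thesis using p by (simp add: less_divide_eq)
      qed
      finally have "norm (t *\<^sub>R g \<xi>) < r" by simp
      then have "x + t *\<^sub>R g \<xi> \<in> X" using r(2) by (auto simp: dist_norm)
      then have "\<bar>ell (x + t *\<^sub>R g \<xi>) \<xi> - ell x \<xi>\<bar> \<le> G * norm (t *\<^sub>R g \<xi>)"
        using lip[OF \<xi>] x_in unfolding lipschitz_on_set_def by fastforce
      also have "\<dots> \<le> \<bar>G\<bar> * (\<bar>t\<bar> * norm (g \<xi>))" by (simp add: mult_right_mono)
      finally show "\<bar>(ell (x + t *\<^sub>R g \<xi>) \<xi> - ell x \<xi>) / t\<bar> \<le> \<bar>G\<bar> * norm (g \<xi>)"
        using t by (simp add: abs_divide divide_le_eq mult.commute mult.left_commute)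
    qed
    have "\<bar>inner (g \<xi>) (g \<xi>)\<bar> \<le> \<bar>G\<bar> * norm (g \<xi>)"
      by (rule tendsto_le[OF _ tendsto_const tendsto_rabs[OF lim] ev]) simp
    then have n1: "(norm (g \<xi>))\<^sup>2 \<le> \<bar>G\<bar> * norm (g \<xi>)" by (simp add: power2_norm_eq_inner)
    have "norm (g \<xi>) \<le> \<bar>G\<bar>"
    proof (cases "norm (g \<xi>) = 0")
      case False then show ?thesis using n1 by (simp add: power2_eq_square)
    qed simp
    then have "(norm (g \<xi>))\<^sup>2 \<le> \<bar>G\<bar>\<^sup>2" by (rule power_mono) simp
    then show ?thesis by simp
  qed
  have iell: "integrable P (\<lambda>\<xi>. ell x \<xi>)" using ell_int[OF x_in] .
  have ivar: "integrable P (\<lambda>\<xi>. (ell x \<xi> - m)\<^sup>2)" using var_int[OF x_in] unfolding m_def .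
  have vb: "(\<integral>\<xi>. (ell x \<xi> - m)\<^sup>2 \<partial>P) \<le> \<sigma>\<^sup>2" using var_bound[OF x_in] unfolding m_def .
  have um: "u \<in> borel_measurable P" unfolding u_def using meas[of x] by measurable
  have am: "a \<in> borel_measurable P" unfolding a_def by (rule borel_measurable_continuous_on[OF f'cont um])
  have uu: "u \<xi> - ub = (ell x \<xi> - m) / lam" for \<xi> unfolding u_def ub_def using lam_pos by (simp add: field_simps)
  have ab: "\<bar>a \<xi> - f' ub\<bar> \<le> (M / lam) * \<bar>ell x \<xi> - m\<bar>" for \<xi>
    using fL[of "u \<xi>" ub] lam_pos unfolding a_def f'_def uu by (simp add: abs_divide)
  have ab2: "(a \<xi> - f' ub)\<^sup>2 \<le> (M / lam)\<^sup>2 * (ell x \<xi> - m)\<^sup>2" for \<xi>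
  proof -
    have "\<bar>a \<xi> - f' ub\<bar>\<^sup>2 \<le> ((M / lam) * \<bar>ell x \<xi> - m\<bar>)\<^sup>2" by (rule power_mono[OF ab]) simp
    then show ?thesis by (simp add: power_mult_distrib power_divide)
  qed
  have ia2: "integrable P (\<lambda>\<xi>. (a \<xi>)\<^sup>2)"
  proof (rule Bochner_Integration.integrable_bound[OF _ _ AE_I2])
    show "integrable P (\<lambda>\<xi>. 2 * (M / lam)\<^sup>2 * (ell x \<xi> - m)\<^sup>2 + 2 * (f' ub)\<^sup>2)"
      using ivar by simp
    show "(\<lambda>\<xi>. (a \<xi>)\<^sup>2) \<in> borel_measurable P" using am by measurable
    fix \<xi>
    have e: "2 * (a \<xi> - f' ub)\<^sup>2 + 2 * (f' ub)\<^sup>2 - (a \<xi>)\<^sup>2 = (a \<xi> - 2 * f' ub)\<^sup>2"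
      by (simp add: power2_eq_square algebra_simps)
    have "(a \<xi>)\<^sup>2 \<le> 2 * (a \<xi> - f' ub)\<^sup>2 + 2 * (f' ub)\<^sup>2"
      using e zero_le_power2[of "a \<xi> - 2 * f' ub"] by linarith
    also have "\<dots> \<le> 2 * (M / lam)\<^sup>2 * (ell x \<xi> - m)\<^sup>2 + 2 * (f' ub)\<^sup>2" using ab2[of \<xi>] by simp
    finally show "norm ((a \<xi>)\<^sup>2) \<le> norm (2 * (M / lam)\<^sup>2 * (ell x \<xi> - m)\<^sup>2 + 2 * (f' ub)\<^sup>2)"
      by simp
  qed
  have ia: "integrable P a"
  proof (rule Bochner_Integration.integrable_bound[OF _ am AE_I2])
    show "integrable P (\<lambda>\<xi>. 1 + (a \<xi>)\<^sup>2)" using ia2 by simp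
    fix \<xi>
    have e: "(a \<xi>)\<^sup>2 + 1 - 2 * \<bar>a \<xi>\<bar> = (\<bar>a \<xi>\<bar> - 1)\<^sup>2"
      by (simp add: power2_eq_square algebra_simps)
    have "\<bar>a \<xi>\<bar> \<le> 1 + (a \<xi>)\<^sup>2" using e zero_le_power2[of "\<bar>a \<xi>\<bar> - 1"] by linarith
    then show "norm (a \<xi>) \<le> norm (1 + (a \<xi>)\<^sup>2)" by simp
  qed
  have iac: "integrable P (\<lambda>\<xi>. (a \<xi> - f' ub)\<^sup>2)"
    using ia2 ia by (simp add: power2_diff)
  have varA: "(\<integral>\<xi>. (a \<xi> - f' ub)\<^sup>2 \<partial>P) \<le> (M / lam)\<^sup>2 * \<sigma>\<^sup>2"
  proof -
    have "(\<integral>\<xi>. (a \<xi> - f' ub)\<^sup>2 \<partial>P) \<le> (\<integral>\<xi>. (M / lam)\<^sup>2 * (ell x \<xi> - m)\<^sup>2 \<partial>P)"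
      by (rule integral_mono[OF iac _ ab2]) (use ivar in simp)
    also have "\<dots> = (M / lam)\<^sup>2 * (\<integral>\<xi>. (ell x \<xi> - m)\<^sup>2 \<partial>P)" by simp
    also have "\<dots> \<le> (M / lam)\<^sup>2 * \<sigma>\<^sup>2" by (rule mult_left_mono[OF vb]) simp
    finally show ?thesis .
  qed
  have fd': "\<And>t. f differentiable (at t)" and fL': "\<And>s t. \<bar>deriv f s - deriv f t\<bar> \<le> M * \<bar>s - t\<bar>"
    using fd fL by auto
  have LB: "\<bar>f q - f p\<bar> \<le> \<bar>q - p\<bar> * (\<bar>f' p\<bar> + M * \<bar>q - p\<bar>)" for p q
    using lip_bound[OF fd' fL'] unfolding f'_def .
  have int0: "integrable P (\<lambda>\<xi>. Lhat \<psi> lam G ell (x, \<eta>) \<xi>)"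
  proof -
    have "integrable P (\<lambda>\<xi>. f (u \<xi>) - f ub)"
    proof (rule Bochner_Integration.integrable_bound[OF _ _ AE_I2])
      show "integrable P (\<lambda>\<xi>. \<bar>ell x \<xi> - m\<bar> / lam * \<bar>f' ub\<bar> + M * ((ell x \<xi> - m)\<^sup>2 / lam\<^sup>2))"
      proof -
        have A: "integrable P (\<lambda>\<xi>. \<bar>ell x \<xi> - m\<bar>)" using iell by (intro integrable_abs integrable_diff) auto
        show ?thesis using A ivar by simp
      qed
      show "(\<lambda>\<xi>. f (u \<xi>) - f ub) \<in> borel_measurable P"
        using borel_measurable_continuous_on[OF fcont um] by measurable
      fix \<xi>
      have "\<bar>f (u \<xi>) - f ub\<bar> \<le> \<bar>u \<xi> - ub\<bar> * (\<bar>f' ub\<bar> + M * \<bar>u \<xi> - ub\<bar>)" by (rule LB)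
      also have "\<dots> = \<bar>ell x \<xi> - m\<bar> / lam * \<bar>f' ub\<bar> + M * ((ell x \<xi> - m)\<^sup>2 / lam\<^sup>2)"
        using lam_pos unfolding uu by (simp add: abs_divide power2_eq_square field_simps)
      finally show "norm (f (u \<xi>) - f ub) \<le> norm (\<bar>ell x \<xi> - m\<bar> / lam * \<bar>f' ub\<bar> + M * ((ell x \<xi> - m)\<^sup>2 / lam\<^sup>2))"
        using M0 by simp
    qed
    then have "integrable P (\<lambda>\<xi>. (f (u \<xi>) - f ub) + f ub)"
      by (rule Bochner_Integration.integrable_add) simp
    then have "integrable P (\<lambda>\<xi>. lam * ((f (u \<xi>) - f ub) + f ub))"
      by (rule Bochner_Integration.integrable_mult_right)
    then have "integrable P (\<lambda>\<xi>. lam * ((f (u \<xi>) - f ub) + f ub) + G * \<eta>)"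
      by (rule Bochner_Integration.integrable_add) simp
    then show ?thesis unfolding Lh u_def by simp
  qed
  have key: "integrable P (\<lambda>\<xi>. inner h (v \<xi>)) \<and> inner h w = (\<integral>\<xi>. inner h (v \<xi>) \<partial>P)" for h :: "'a \<times> real"
  proof -
    define c where "c = r / (2 * (norm h + 1))"
    have np: "norm h + 1 > 0" by (auto intro: add_nonneg_pos)
    have cpos: "c > 0" unfolding c_def using r(1) np by simp
    have "c * norm h = r * (norm h / (2 * (norm h + 1)))" unfolding c_def by simp
    also have "\<dots> < r * 1" using np r(1) by (intro mult_strict_left_mono) (auto simp: divide_less_eq)
    finally have hc: "norm (c *\<^sub>R h) < r" using cpos by simp
    define h' where "h' = c *\<^sub>R h"
    define k where "k = fst h'"
    define s where "s = snd h'"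
    have h'ks: "h' = (k, s)" unfolding k_def s_def by simp
    have kr: "norm k < r" using norm_fst_le[of k s] hc unfolding h'_def[symmetric] h'ks by linarith
    define C where "C = \<bar>G\<bar> * (norm k + \<bar>s\<bar>) / lam"
    have C0: "C \<ge> 0" unfolding C_def using lam_pos by simp
    define W where "W \<xi> = lam * C * (\<bar>a \<xi>\<bar> + M * C) + \<bar>G\<bar> * \<bar>s\<bar>" for \<xi>
    have iW: "integrable P W" unfolding W_def using ia by (simp add: distrib_left)
    have bnd: "\<bar>(Lhat \<psi> lam G ell ((x, \<eta>) + (1 / real (Suc n)) *\<^sub>R h') \<xi> - Lhat \<psi> lam G ell (x, \<eta>) \<xi>)
          / (1 / real (Suc n))\<bar> \<le> W \<xi>" if \<xi>: "\<xi> \<in> space P" for n \<xi>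
    proof -
      define t where "t = 1 / real (Suc n)"
      have t0: "t > 0" and t1: "t \<le> 1" unfolding t_def by auto
      define U where "U = (ell (x + t *\<^sub>R k) \<xi> - G * (\<eta> + t * s)) / lam"
      have pt: "(x, \<eta>) + t *\<^sub>R h' = (x + t *\<^sub>R k, \<eta> + t * s)" unfolding h'ks by simp
      have "norm (t *\<^sub>R k) \<le> norm k" using t0 t1 by (simp add: mult_left_le_one_le)
      then have "x + t *\<^sub>R k \<in> X" using kr r(2) by (auto simp: dist_norm)
      then have l1: "\<bar>ell (x + t *\<^sub>R k) \<xi> - ell x \<xi>\<bar> \<le> G * norm (t *\<^sub>R k)"
        using lip[OF \<xi>] x_in unfolding lipschitz_on_set_def by fastforce
      also have "\<dots> \<le> \<bar>G\<bar> * (t * norm k)" using t0 by (simp add: mult_right_mono)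
      finally have l2: "\<bar>ell (x + t *\<^sub>R k) \<xi> - ell x \<xi>\<bar> \<le> \<bar>G\<bar> * (t * norm k)" .
      have Uu: "U - u \<xi> = (ell (x + t *\<^sub>R k) \<xi> - ell x \<xi> - G * t * s) / lam"
        unfolding U_def u_def using lam_pos by (simp add: field_simps)
      define E where "E = ell (x + t *\<^sub>R k) \<xi> - ell x \<xi> - G * t * s"
      have "\<bar>G * t * s\<bar> = \<bar>G\<bar> * t * \<bar>s\<bar>" using t0 by (simp add: abs_mult)
      then have "\<bar>E\<bar> \<le> \<bar>G\<bar> * (t * norm k) + \<bar>G\<bar> * t * \<bar>s\<bar>"
        unfolding E_def using l2 abs_triangle_ineq4[of "ell (x + t *\<^sub>R k) \<xi> - ell x \<xi>" "G * t * s"] by linarith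
      also have "\<dots> = t * (\<bar>G\<bar> * (norm k + \<bar>s\<bar>))" by (simp add: algebra_simps)
      finally have Eb: "\<bar>E\<bar> \<le> t * (\<bar>G\<bar> * (norm k + \<bar>s\<bar>))" .
      have "\<bar>U - u \<xi>\<bar> = \<bar>E\<bar> / lam" unfolding Uu E_def using lam_pos by (simp add: abs_divide)
      also have "\<dots> \<le> t * (\<bar>G\<bar> * (norm k + \<bar>s\<bar>)) / lam" using Eb lam_pos by (simp add: divide_right_mono)
      also have "\<dots> = t * C" unfolding C_def by simp
      finally have dU: "\<bar>U - u \<xi>\<bar> \<le> t * C" .
      have dU1: "\<bar>U - u \<xi>\<bar> \<le> C" using dU t1 C0 by (meson mult_left_le_one_le order_trans t0 less_imp_le)
      have "\<bar>f U - f (u \<xi>)\<bar> \<le> \<bar>U - u \<xi>\<bar> * (\<bar>a \<xi>\<bar> + M * \<bar>U - u \<xi>\<bar>)"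
        using LB[of U "u \<xi>"] unfolding a_def .
      also have "\<dots> \<le> (t * C) * (\<bar>a \<xi>\<bar> + M * C)"
        using dU dU1 M0 by (intro mult_mono add_left_mono mult_left_mono) auto
      finally have fU: "\<bar>f U - f (u \<xi>)\<bar> \<le> t * C * (\<bar>a \<xi>\<bar> + M * C)" .
      have diff: "Lhat \<psi> lam G ell ((x, \<eta>) + t *\<^sub>R h') \<xi> - Lhat \<psi> lam G ell (x, \<eta>) \<xi>
          = lam * (f U - f (u \<xi>)) + G * (t * s)"
        unfolding pt Lh U_def u_def by (simp add: algebra_simps)
      have q1: "\<bar>lam * (f U - f (u \<xi>))\<bar> \<le> lam * (t * C * (\<bar>a \<xi>\<bar> + M * C))"
        using fU lam_pos by (simp add: abs_mult mult_left_mono)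
      have q2: "\<bar>G * (t * s)\<bar> = \<bar>G\<bar> * (t * \<bar>s\<bar>)" using t0 by (simp add: abs_mult)
      have "\<bar>lam * (f U - f (u \<xi>)) + G * (t * s)\<bar> \<le> lam * (t * C * (\<bar>a \<xi>\<bar> + M * C)) + \<bar>G\<bar> * (t * \<bar>s\<bar>)"
        using q1 q2 abs_triangle_ineq[of "lam * (f U - f (u \<xi>))" "G * (t * s)"] by linarith
      also have "\<dots> = t * W \<xi>" unfolding W_def by (simp add: algebra_simps)
      finally have "\<bar>lam * (f U - f (u \<xi>)) + G * (t * s)\<bar> / t \<le> W \<xi>"
        using t0 by (simp add: divide_le_eq mult.commute)
      then show ?thesis unfolding t_def[symmetric] diff using t0 by (simp add: abs_divide)
    qed
    have R: "integrable P (\<lambda>\<xi>. inner h' (v \<xi>)) \<and> inner h' w = (\<integral>\<xi>. inner h' (v \<xi>) \<partial>P)"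
      by (rule deriv_under_integral[where F="\<lambda>z \<xi>. Lhat \<psi> lam G ell z \<xi>", OF Phi vD Lm int0 iW bnd])
    have hh: "inner h' (v \<xi>) = c * inner h (v \<xi>)" for \<xi> unfolding h'_def by simp
    have "integrable P (\<lambda>\<xi>. (1 / c) * inner h' (v \<xi>))" using R by simp
    then have I: "integrable P (\<lambda>\<xi>. inner h (v \<xi>))" using cpos by (simp add: hh)
    have "c * inner h w = c * (\<integral>\<xi>. inner h (v \<xi>) \<partial>P)" using R unfolding hh by (simp add: h'_def)
    then show ?thesis using I cpos by simp
  qed
  obtain w1 w2 where ww: "w = (w1, w2)" by (cases w)
  define A where "A = (\<integral>\<xi>. a \<xi> \<partial>P)"
  define S2 where "S2 = (\<integral>\<xi>. (a \<xi>)\<^sup>2 \<partial>P)"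
  define p where "p \<xi> = inner (w1, 0::real) (v \<xi>)" for \<xi>
  have w2e: "w2 = G - G * A"
  proof -
    have "inner (0::'a, 1::real) w = (\<integral>\<xi>. inner (0::'a, 1::real) (v \<xi>) \<partial>P)" using key by blast
    also have "\<dots> = (\<integral>\<xi>. G - G * a \<xi> \<partial>P)" unfolding v_def by (simp add: algebra_simps)
    also have "\<dots> = G - G * A" unfolding A_def using ia by (simp add: prob_space)
    finally show ?thesis unfolding ww by simp
  qed
  have ip: "integrable P p" unfolding p_def using key by blast
  have Ip: "(\<integral>\<xi>. p \<xi> \<partial>P) = (norm w1)\<^sup>2"
  proof -
    have "inner (w1, 0::real) w = (\<integral>\<xi>. p \<xi> \<partial>P)" unfolding p_def using key by blast
    then show ?thesis unfolding ww by (simp add: power2_norm_eq_inner)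
  qed
  define B where "B \<xi> = G\<^sup>2 * (a \<xi>)\<^sup>2 - 2 * p \<xi> + (norm w1)\<^sup>2 + G\<^sup>2 * ((a \<xi>)\<^sup>2 - 2 * A * a \<xi> + A\<^sup>2)" for \<xi>
  have pw: "(norm (grad (\<lambda>z. Lhat \<psi> lam G ell z \<xi>) (x, \<eta>) - w))\<^sup>2 \<le> B \<xi>" if \<xi>: "\<xi> \<in> space P" for \<xi>
  proof -
    have gr: "grad (\<lambda>z. Lhat \<psi> lam G ell z \<xi>) (x, \<eta>) = v \<xi>" by (rule grad_eq[OF vD[OF \<xi>]])
    have n1: "(norm (v \<xi> - w))\<^sup>2 = (norm (a \<xi> *\<^sub>R g \<xi> - w1))\<^sup>2 + (G * (1 - a \<xi>) - w2)\<^sup>2"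
      unfolding v_def ww by (simp add: norm_Pair)
    have n2: "(norm (a \<xi> *\<^sub>R g \<xi> - w1))\<^sup>2 = (a \<xi>)\<^sup>2 * (norm (g \<xi>))\<^sup>2 - 2 * p \<xi> + (norm w1)\<^sup>2"
      unfolding p_def v_def power2_norm_eq_inner
      by (simp add: inner_diff_left inner_diff_right inner_commute power2_eq_square algebra_simps)
    have n3: "(a \<xi>)\<^sup>2 * (norm (g \<xi>))\<^sup>2 \<le> (a \<xi>)\<^sup>2 * G\<^sup>2" by (rule mult_left_mono[OF gb[OF \<xi>]]) simp
    have n4: "(G * (1 - a \<xi>) - w2)\<^sup>2 = G\<^sup>2 * ((a \<xi>)\<^sup>2 - 2 * A * a \<xi> + A\<^sup>2)"
      unfolding w2e by (simp add: power2_eq_square algebra_simps)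
    show ?thesis unfolding gr n1 n2 n4 B_def using n3 by (simp add: mult.commute)
  qed
  have B0: "B \<xi> \<ge> 0" if "\<xi> \<in> space P" for \<xi> using pw[OF that] by (meson order_trans zero_le_power2)
  have iB: "integrable P B" unfolding B_def using ia ia2 ip by simp
  have IB: "(\<integral>\<xi>. B \<xi> \<partial>P) = G\<^sup>2 * S2 - 2 * (norm w1)\<^sup>2 + (norm w1)\<^sup>2 + G\<^sup>2 * (S2 - 2 * A * A + A\<^sup>2)"
    unfolding B_def S2_def A_def using ia ia2 ip Ip by (simp add: prob_space)
  have v1: "S2 - 2 * f' ub * A + (f' ub)\<^sup>2 \<le> (M / lam)\<^sup>2 * \<sigma>\<^sup>2"
  proof -
    have "(\<integral>\<xi>. (a \<xi> - f' ub)\<^sup>2 \<partial>P) = (\<integral>\<xi>. (a \<xi>)\<^sup>2 - 2 * f' ub * a \<xi> + (f' ub)\<^sup>2 \<partial>P)"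
      by (simp add: power2_diff algebra_simps)
    also have "\<dots> = S2 - 2 * f' ub * A + (f' ub)\<^sup>2" unfolding S2_def A_def using ia ia2 by (simp add: prob_space)
    finally show ?thesis using varA by simp
  qed
  have v2: "S2 - A\<^sup>2 \<le> (M / lam)\<^sup>2 * \<sigma>\<^sup>2"
  proof -
    have "S2 - A\<^sup>2 = S2 - 2 * f' ub * A + (f' ub)\<^sup>2 - (A - f' ub)\<^sup>2" by (simp add: power2_eq_square algebra_simps)
    then show ?thesis using v1 zero_le_power2[of "A - f' ub"] by linarith
  qed
  have v3: "G\<^sup>2 * A\<^sup>2 \<le> 2 * G\<^sup>2 + 2 * w2\<^sup>2"
  proof -
    have "G\<^sup>2 * A\<^sup>2 = (G - w2)\<^sup>2" unfolding w2e by (simp add: power2_eq_square algebra_simps)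
    also have "\<dots> \<le> 2 * G\<^sup>2 + 2 * w2\<^sup>2"
    proof -
      have "2 * G\<^sup>2 + 2 * w2\<^sup>2 - (G - w2)\<^sup>2 = (G + w2)\<^sup>2" by (simp add: power2_eq_square algebra_simps)
      then show ?thesis using zero_le_power2[of "G + w2"] by linarith
    qed
    finally show ?thesis .
  qed
  have K: "G\<^sup>2 * ((M / lam)\<^sup>2 * \<sigma>\<^sup>2) = G\<^sup>2 * M\<^sup>2 * \<sigma>\<^sup>2 / lam\<^sup>2" by (simp add: power_divide)
  have K0: "G\<^sup>2 * M\<^sup>2 * \<sigma>\<^sup>2 / lam\<^sup>2 \<ge> 0" by simp
  have v4: "G\<^sup>2 * (S2 - A\<^sup>2) \<le> G\<^sup>2 * M\<^sup>2 * \<sigma>\<^sup>2 / lam\<^sup>2"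
    using mult_left_mono[OF v2, of "G\<^sup>2"] K by simp
  have nw: "(norm w)\<^sup>2 = (norm w1)\<^sup>2 + w2\<^sup>2" unfolding ww by (simp add: norm_Pair)
  have fin: "(\<integral>\<xi>. B \<xi> \<partial>P) \<le> 11 * G\<^sup>2 * M\<^sup>2 * \<sigma>\<^sup>2 / lam\<^sup>2 + 8 * (G\<^sup>2 + (norm w)\<^sup>2)"
  proof -
    have "(\<integral>\<xi>. B \<xi> \<partial>P) = 2 * (G\<^sup>2 * (S2 - A\<^sup>2)) + G\<^sup>2 * A\<^sup>2 - (norm w1)\<^sup>2"
      unfolding IB by (simp add: power2_eq_square algebra_simps)
    moreover have "11 * G\<^sup>2 * M\<^sup>2 * \<sigma>\<^sup>2 / lam\<^sup>2 = 11 * (G\<^sup>2 * M\<^sup>2 * \<sigma>\<^sup>2 / lam\<^sup>2)" by simp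
    moreover define K where "K = G\<^sup>2 * M\<^sup>2 * \<sigma>\<^sup>2 / lam\<^sup>2"
    ultimately have "(\<integral>\<xi>. B \<xi> \<partial>P) = 2 * (G\<^sup>2 * (S2 - A\<^sup>2)) + G\<^sup>2 * A\<^sup>2 - (norm w1)\<^sup>2"
        and e11: "11 * G\<^sup>2 * M\<^sup>2 * \<sigma>\<^sup>2 / lam\<^sup>2 = 11 * K" by simp_all
    moreover have "G\<^sup>2 * (S2 - A\<^sup>2) \<le> K" "0 \<le> K" using v4 K0 unfolding K_def by simp_all
    ultimately show ?thesis unfolding e11
      by (intro arith_fin[OF _ _ _ v3 nw]) simp_all
  qed
  have "(\<integral>\<^sup>+\<xi>. ennreal ((norm (grad (\<lambda>z. Lhat \<psi> lam G ell z \<xi>) (x, \<eta>) - w))\<^sup>2) \<partial>P)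
      \<le> (\<integral>\<^sup>+\<xi>. ennreal (B \<xi>) \<partial>P)"
    by (rule nn_integral_mono) (use pw in \<open>simp add: ennreal_leI\<close>)
  also have "\<dots> = ennreal (\<integral>\<xi>. B \<xi> \<partial>P)"
    by (rule nn_integral_eq_integral[OF iB AE_I2[OF B0]])
  also have "\<dots> \<le> ennreal (11 * G\<^sup>2 * M\<^sup>2 * \<sigma>\<^sup>2 / lam\<^sup>2 + 8 * (G\<^sup>2 + (norm w)\<^sup>2))"
    by (rule ennreal_leI[OF fin])
  finally show ?thesis unfolding w_def .
qed

end
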